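(* For every graph $G$ and every positive integer $k$, $\gamma_k(G)\le \chi_{\mu_k}(G)$.
   Context: All graphs are finite, simple and undirected. $d_G(u,v)$ denotes the distance in $G$; a $u,v$-geodesic is a shortest $u,v$-path. For a positive integer $k$, a set $M\subseteq V(G)$ is a $k$-distance mutual-visibility set if for every two vertices $u,v\in M$ there exists a $u,v$-geodesic of length at most $k$ none of whose internal vertices lies in $M$. The $k$-distance mutual-visibility chromatic number $\chi_{\mu_k}(G)$ is the minimum cardinality of a partition of $V(G)$ into $k$-distance mutual-visibility sets. A set $D\subseteq V(G)$ is a distance $k$-dominating set if every vertex of $V(G)\setminus D$ is at distance at most $k$ from some vertex of $D$; $\gamma_k(G)$ is the minimum cardinality of such a set. *)

theory Defs
  imports Main "HOL-Library.Extended_Nat" "HOL-Library.Disjoint_Sets"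
begin

definition simple_graph :: "'a set \<Rightarrow> ('a \<Rightarrow> 'a \<Rightarrow> bool) \<Rightarrow> bool" where
  "simple_graph V E \<longleftrightarrow> finite V \<and> (\<forall>u v. E u v \<longrightarrow> u \<in> V \<and> v \<in> V)
     \<and> (\<forall>u v. E u v \<longrightarrow> E v u) \<and> (\<forall>v. \<not> E v v)"

definition walk :: "'a set \<Rightarrow> ('a \<Rightarrow> 'a \<Rightarrow> bool) \<Rightarrow> 'a list \<Rightarrow> bool" where
  "walk V E p \<longleftrightarrow> p \<noteq> [] \<and> set p \<subseteq> V \<and> (\<forall>i. Suc i < length p \<longrightarrow> E (p ! i) (p ! Suc i))"

definition walk_betw :: "'a set \<Rightarrow> ('a \<Rightarrow> 'a \<Rightarrow> bool) \<Rightarrow> 'a \<Rightarrow> 'a list \<Rightarrow> 'a \<Rightarrow> bool" where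
  "walk_betw V E u p v \<longleftrightarrow> walk V E p \<and> hd p = u \<and> last p = v"

text \<open>Distance d_G(u,v) (infinite if no walk exists).\<close>
definition gdist :: "'a set \<Rightarrow> ('a \<Rightarrow> 'a \<Rightarrow> bool) \<Rightarrow> 'a \<Rightarrow> 'a \<Rightarrow> enat" where
  "gdist V E u v = (INF p \<in> {p. walk_betw V E u p v}. enat (length p - 1))"

text \<open>A u,v-geodesic: a u,v-walk of length d_G(u,v) (necessarily a path).\<close>
definition geodesic :: "'a set \<Rightarrow> ('a \<Rightarrow> 'a \<Rightarrow> bool) \<Rightarrow> 'a \<Rightarrow> 'a list \<Rightarrow> 'a \<Rightarrow> bool" where
  "geodesic V E u p v \<longleftrightarrow> walk_betw V E u p v \<and> enat (length p - 1) = gdist V E u v"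

definition internal :: "'a list \<Rightarrow> 'a set" where
  "internal p = set (butlast (tl p))"

definition k_dist_mv_set :: "'a set \<Rightarrow> ('a \<Rightarrow> 'a \<Rightarrow> bool) \<Rightarrow> nat \<Rightarrow> 'a set \<Rightarrow> bool" where
  "k_dist_mv_set V E k M \<longleftrightarrow> M \<subseteq> V \<and>
     (\<forall>u\<in>M. \<forall>v\<in>M. u \<noteq> v \<longrightarrow>
        (\<exists>p. geodesic V E u p v \<and> length p - 1 \<le> k \<and> internal p \<inter> M = {}))"

definition chi_mu :: "'a set \<Rightarrow> ('a \<Rightarrow> 'a \<Rightarrow> bool) \<Rightarrow> nat \<Rightarrow> nat" where
  "chi_mu V E k = Inf {card P | P. partition_on V P \<and> (\<forall>M\<in>P. k_dist_mv_set V E k M)}"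

definition dist_k_dominating :: "'a set \<Rightarrow> ('a \<Rightarrow> 'a \<Rightarrow> bool) \<Rightarrow> nat \<Rightarrow> 'a set \<Rightarrow> bool" where
  "dist_k_dominating V E k D \<longleftrightarrow> D \<subseteq> V \<and>
     (\<forall>v \<in> V - D. \<exists>u\<in>D. gdist V E v u \<le> enat k)"

definition gamma_k :: "'a set \<Rightarrow> ('a \<Rightarrow> 'a \<Rightarrow> bool) \<Rightarrow> nat \<Rightarrow> nat" where
  "gamma_k V E k = Inf {card D | D. dist_k_dominating V E k D}"

end

theory Submission
  imports Defs
begin

theorem proposition2p3:
  fixes V :: "'a set" and E :: "'a \<Rightarrow> 'a \<Rightarrow> bool" and k :: nat
  assumes "simple_graph V E" and "k \<ge> 1"
  shows "gamma_k V E k \<le> chi_mu V E k"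
proof -
  have finV: "finite V" using assms(1) by (simp add: simple_graph_def)
  let ?S = "{card P | P. partition_on V P \<and> (\<forall>M\<in>P. k_dist_mv_set V E k M)}"
  have "partition_on V ((\<lambda>v. {v}) ` V)"
    by (auto simp: partition_on_def disjoint_def)
  moreover have "\<forall>M\<in>(\<lambda>v. {v}) ` V. k_dist_mv_set V E k M"
    by (auto simp: k_dist_mv_set_def)
  ultimately have "?S \<noteq> {}" by blast
  hence "chi_mu V E k \<in> ?S" unfolding chi_mu_def by (rule Inf_nat_def1)
  then obtain P where P: "partition_on V P" "\<forall>M\<in>P. k_dist_mv_set V E k M"
    and cP: "chi_mu V E k = card P" by auto
  define f where "f M = (SOME x. x \<in> M)" for M :: "'a set"
  have fM: "f M \<in> M" if "M \<in> P" for M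
  proof -
    have "M \<noteq> {}" using P(1) that by (auto simp: partition_on_def)
    thus ?thesis unfolding f_def by (auto intro: someI)
  qed
  have MV: "M \<subseteq> V" if "M \<in> P" for M using P(1) that by (auto simp: partition_on_def)
  have finP: "finite P"
  proof -
    have "P \<subseteq> Pow V" using MV by auto
    thus ?thesis using finV by (meson finite_Pow_iff finite_subset)
  qed
  define D where "D = f ` P"
  have dom: "dist_k_dominating V E k D"
    unfolding dist_k_dominating_def
  proof safe
    fix x assume "x \<in> D" thus "x \<in> V" using fM MV unfolding D_def by auto
  next
    fix v assume v: "v \<in> V" "v \<notin> D"
    then obtain M where M: "M \<in> P" "v \<in> M" using P(1) by (auto simp: partition_on_def)
    have ne: "v \<noteq> f M" using v(2) M(1) unfolding D_def by auto
    from P(2) M(1) have "k_dist_mv_set V E k M" by auto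
    then obtain p where "geodesic V E v p (f M)" "length p - 1 \<le> k"
      unfolding k_dist_mv_set_def using M fM ne by blast
    hence "gdist V E v (f M) \<le> enat k" unfolding geodesic_def by (metis enat_ord_simps(1))
    moreover have "f M \<in> D" using M unfolding D_def by auto
    ultimately show "\<exists>u\<in>D. gdist V E v u \<le> enat k" by blast
  qed
  have "gamma_k V E k \<le> card D"
    unfolding gamma_k_def using dom by (intro cInf_lower) auto
  also have "card D \<le> card P" unfolding D_def using finP by (rule card_image_le)
  finally show ?thesis using cP by simp
qed

end
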